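(* Let $m,p,n$ be positive integers with $p\mid m$, $n>1$. (i) For $\lambda>1$, $\mathbf M_{\boldsymbol\theta}=(M_{\theta_1},\ldots,M_{\theta_n})$ is a $\boldsymbol\Theta_n$-contraction on $L^2(\mathbb D^n,dV^{(\lambda)})$. (ii) For $\lambda\ge1$, the restriction of $\mathbf M_{\boldsymbol\theta}$ to $\mathbb A^{(\lambda)}(\mathbb D^n)$ is a $\boldsymbol\Theta_n$-contraction.
   Context: $\theta_i(z)=s_i(z_1^m,\ldots,z_n^m)$ for $1\le i\le n-1$ ($s_i$ elementary symmetric), $\theta_n(z)=(z_1\cdots z_n)^{m/p}$; a $\boldsymbol\Theta_n$-contraction is a commuting tuple $T$ with $\|f(T)\|\le\sup_{\boldsymbol\theta(\overline{\mathbb D}^n)}|f|$ for all polynomials $f$. For $\lambda>1$, $dV^{(\lambda)}=\big(\frac{\lambda-1}{\pi}\big)^n\prod_{i=1}^n(1-|z_i|^2)^{\lambda-2}dV$ ($dV$ Lebesgue measure on $\mathbb D^n$) and $\mathbb A^{(\lambda)}(\mathbb D^n)$ is the space of holomorphic functions in $L^2(\mathbb D^n,dV^{(\lambda)})$, with reproducing kernel $\prod_{i=1}^n(1-z_i\bar w_i)^{-\lambda}$; $\mathbb A^{(1)}(\mathbb D^n)$ denotes the Hardy space $H^2(\mathbb D^n)$ with kernel $\prod_i(1-z_i\bar w_i)^{-1}$. $M_{\theta_i}$ is multiplication by $\theta_i$. *)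

theory Defs
  imports "HOL-Analysis.Analysis"
begin

text \<open>Points of the polydisc are extensional functions on the index set {..<n}
  (coordinate i+1 of the paper is index i here), as for product measures PiM.\<close>

definition polydisc :: "nat \<Rightarrow> (nat \<Rightarrow> complex) set" where
  "polydisc n = PiE {..<n} (\<lambda>_. ball 0 1)"

definition cpolydisc :: "nat \<Rightarrow> (nat \<Rightarrow> complex) set" where
  "cpolydisc n = PiE {..<n} (\<lambda>_. cball 0 1)"

text \<open>The symmetrized map: theta m p n j z is theta_{j+1}(z) of the paper, j < n.\<close>
definition theta :: "nat \<Rightarrow> nat \<Rightarrow> nat \<Rightarrow> nat \<Rightarrow> (nat \<Rightarrow> complex) \<Rightarrow> complex" where
  "theta m p n j z =
     (if j + 1 < n
      then (\<Sum>S\<in>{S. S \<subseteq> {..<n} \<and> card S = j + 1}. \<Prod>l\<in>S. z l ^ m)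
      else (\<Prod>l<n. z l) ^ (m div p))"

definition theta_map :: "nat \<Rightarrow> nat \<Rightarrow> nat \<Rightarrow> (nat \<Rightarrow> complex) \<Rightarrow> (nat \<Rightarrow> complex)" where
  "theta_map m p n z = restrict (\<lambda>j. theta m p n j z) {..<n}"

definition is_poly_coeffs :: "nat \<Rightarrow> ((nat \<Rightarrow> nat) \<Rightarrow> complex) \<Rightarrow> bool" where
  "is_poly_coeffs n c \<longleftrightarrow> finite {\<alpha>. c \<alpha> \<noteq> 0} \<and> (\<forall>\<alpha>. c \<alpha> \<noteq> 0 \<longrightarrow> (\<forall>i\<ge>n. \<alpha> i = 0))"

definition mpoly_eval :: "nat \<Rightarrow> ((nat \<Rightarrow> nat) \<Rightarrow> complex) \<Rightarrow> (nat \<Rightarrow> complex) \<Rightarrow> complex" where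
  "mpoly_eval n c w = (\<Sum>\<alpha>\<in>{\<alpha>. c \<alpha> \<noteq> 0}. c \<alpha> * (\<Prod>i<n. w i ^ \<alpha> i))"

definition op_poly :: "nat \<Rightarrow> ((nat \<Rightarrow> nat) \<Rightarrow> complex) \<Rightarrow> (nat \<Rightarrow> ('a \<Rightarrow> complex) \<Rightarrow> ('a \<Rightarrow> complex))
                       \<Rightarrow> ('a \<Rightarrow> complex) \<Rightarrow> ('a \<Rightarrow> complex)" where
  "op_poly n c T h = (\<lambda>x. \<Sum>\<alpha>\<in>{\<alpha>. c \<alpha> \<noteq> 0}. c \<alpha> * fold (\<lambda>i. T i ^^ \<alpha> i) [0..<n] h x)"

definition theta_contraction ::
  "nat \<Rightarrow> nat \<Rightarrow> nat \<Rightarrow> ('a \<Rightarrow> complex) set \<Rightarrow> (('a \<Rightarrow> complex) \<Rightarrow> real)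
     \<Rightarrow> (nat \<Rightarrow> ('a \<Rightarrow> complex) \<Rightarrow> ('a \<Rightarrow> complex)) \<Rightarrow> bool" where
  "theta_contraction m p n V N T \<longleftrightarrow>
     (\<forall>j<n. \<forall>h\<in>V. T j h \<in> V) \<and>
     (\<forall>j<n. \<forall>h\<in>V. \<forall>g\<in>V. \<forall>a::complex.
         T j (\<lambda>x. a * h x + g x) = (\<lambda>x. a * T j h x + T j g x)) \<and>
     (\<forall>j<n. \<forall>k<n. \<forall>h\<in>V. T j (T k h) = T k (T j h)) \<and>
     (\<forall>c. is_poly_coeffs n c \<longrightarrow>
        (\<forall>h\<in>V. N (op_poly n c T h)
                 \<le> (SUP w\<in>theta_map m p n ` cpolydisc n. cmod (mpoly_eval n c w)) * N h))"

definition mult_op :: "('a \<Rightarrow> complex) \<Rightarrow> ('a \<Rightarrow> complex) \<Rightarrow> ('a \<Rightarrow> complex)" where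
  "mult_op f h = (\<lambda>z. f z * h z)"

definition disc_measure :: "real \<Rightarrow> complex measure" where
  "disc_measure lam = density lborel
     (\<lambda>z. ennreal (indicator (ball 0 1) z * ((lam - 1) / pi) * (1 - (cmod z)\<^sup>2) powr (lam - 2)))"

definition polydisc_measure :: "nat \<Rightarrow> real \<Rightarrow> (nat \<Rightarrow> complex) measure" where
  "polydisc_measure n lam = PiM {..<n} (\<lambda>_. disc_measure lam)"

definition L2space :: "nat \<Rightarrow> real \<Rightarrow> ((nat \<Rightarrow> complex) \<Rightarrow> complex) set" where
  "L2space n lam = {h. h \<in> borel_measurable (polydisc_measure n lam) \<and>
                       integrable (polydisc_measure n lam) (\<lambda>z. (cmod (h z))\<^sup>2)}"

definition L2norm :: "nat \<Rightarrow> real \<Rightarrow> ((nat \<Rightarrow> complex) \<Rightarrow> complex) \<Rightarrow> real" where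
  "L2norm n lam h = sqrt (\<integral>z. (cmod (h z))\<^sup>2 \<partial>polydisc_measure n lam)"

definition holo_polydisc :: "nat \<Rightarrow> ((nat \<Rightarrow> complex) \<Rightarrow> complex) \<Rightarrow> bool" where
  "holo_polydisc n h \<longleftrightarrow> continuous_on (polydisc n) h \<and>
     (\<forall>z\<in>polydisc n. \<forall>i<n. (\<lambda>w. h (z(i := w))) holomorphic_on ball 0 1)"

text \<open>Hardy space: normalized Haar measure on the torus, parametrized by [0,2pi]^n.\<close>
definition circle_measure :: "real measure" where
  "circle_measure = density lborel (\<lambda>t. ennreal (indicator {0..2*pi} t / (2*pi)))"

definition hardy_int :: "nat \<Rightarrow> ((nat \<Rightarrow> complex) \<Rightarrow> complex) \<Rightarrow> real \<Rightarrow> real" where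
  "hardy_int n h r = (\<integral>t. (cmod (h (restrict (\<lambda>i. complex_of_real r * cis (t i)) {..<n})))\<^sup>2
                         \<partial>PiM {..<n} (\<lambda>_. circle_measure))"

definition hardy_space :: "nat \<Rightarrow> ((nat \<Rightarrow> complex) \<Rightarrow> complex) set" where
  "hardy_space n = {h. holo_polydisc n h \<and> bdd_above (hardy_int n h ` {0<..<1})}"

definition hardy_norm :: "nat \<Rightarrow> ((nat \<Rightarrow> complex) \<Rightarrow> complex) \<Rightarrow> real" where
  "hardy_norm n h = sqrt (SUP r\<in>{0<..<1}. hardy_int n h r)"

text \<open>A^(lambda)(D^n): weighted Bergman space for lambda > 1, Hardy space for lambda = 1.\<close>
definition A_space :: "nat \<Rightarrow> real \<Rightarrow> ((nat \<Rightarrow> complex) \<Rightarrow> complex) set" where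
  "A_space n lam = (if lam = 1 then hardy_space n
                    else {h \<in> L2space n lam. holo_polydisc n h})"

definition A_norm :: "nat \<Rightarrow> real \<Rightarrow> ((nat \<Rightarrow> complex) \<Rightarrow> complex) \<Rightarrow> real" where
  "A_norm n lam = (if lam = 1 then hardy_norm n else L2norm n lam)"

end

theory Submission
  imports Defs
begin

lemma pow_mult_op: "(mult_op f ^^ k) h = (\<lambda>x. f x ^ k * h x)"
  by (induction k arbitrary: h) (auto simp: mult_op_def)

lemma fold_mult_op:
  "fold (\<lambda>i. mult_op (\<phi> i) ^^ a i) xs h = (\<lambda>x. prod_list (map (\<lambda>i. \<phi> i x ^ a i) xs) * h x)"
  by (induction xs arbitrary: h) (auto simp: pow_mult_op mult.assoc)

lemma prod_list_upt: "prod_list (map f [0..<n]) = prod f {..<n}"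
  using prod.distinct_set_conv_list[of "[0..<n]" f] by (simp add: atLeast0LessThan)

lemma op_poly_theta:
  "op_poly n c (\<lambda>j. mult_op (theta m p n j)) h = (\<lambda>x. mpoly_eval n c (theta_map m p n x) * h x)"
proof -
  have "mpoly_eval n c (theta_map m p n x) = (\<Sum>\<alpha>\<in>{\<alpha>. c \<alpha> \<noteq> 0}. c \<alpha> * (\<Prod>i<n. theta m p n i x ^ \<alpha> i))" for x
    unfolding mpoly_eval_def theta_map_def by (intro sum.cong refl arg_cong2[where f="(*)"] prod.cong) auto
  then show ?thesis
    unfolding op_poly_def fold_mult_op prod_list_upt
    by (auto simp: sum_distrib_right mult.assoc)
qed

lemma mp_theta: "mpoly_eval n c (theta_map m p n x) = (\<Sum>\<alpha>\<in>{\<alpha>. c \<alpha> \<noteq> 0}. c \<alpha> * (\<Prod>i<n. theta m p n i x ^ \<alpha> i))"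
    unfolding mpoly_eval_def theta_map_def by (intro sum.cong refl arg_cong2[where f="(*)"] prod.cong) auto

lemma theta_bound:
  assumes "\<And>l. l < n \<Longrightarrow> cmod (z l) \<le> 1"
  shows "cmod (theta m p n j z) \<le> 2 ^ n"
proof (cases "j + 1 < n")
  case True
  let ?F = "{S. S \<subseteq> {..<n} \<and> card S = j + 1}"
  have fin: "finite ?F" by (rule finite_subset[of _ "Pow {..<n}"]) auto
  have "cmod (theta m p n j z) \<le> (\<Sum>S\<in>?F. cmod (\<Prod>l\<in>S. z l ^ m))"
    using True by (simp add: theta_def norm_sum)
  also have "\<dots> \<le> (\<Sum>S\<in>?F. 1)"
  proof (rule sum_mono)
    fix S assume "S \<in> ?F"
    then have "\<forall>l\<in>S. cmod (z l) \<le> 1" using assms by auto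
    then show "cmod (\<Prod>l\<in>S. z l ^ m) \<le> 1"
      by (auto simp: prod_norm[symmetric] norm_power intro!: prod_le_1 power_le_one)
  qed
  also have "\<dots> = card ?F" by simp
  also have "card ?F \<le> card (Pow {..<n::nat})" by (rule card_mono) auto
  also have "card (Pow {..<n::nat}) = 2 ^ n" by (simp add: card_Pow)
  finally show ?thesis by simp
next
  case False
  have "cmod (theta m p n j z) = (\<Prod>l<n. cmod (z l)) ^ (m div p)"
    using False by (simp add: theta_def prod_norm[symmetric] norm_power)
  also have "\<dots> \<le> 1" using assms by (auto intro!: power_le_one prod_le_1 prod_nonneg)
  also have "(1::real) \<le> 2 ^ n" by simp
  finally show ?thesis .
qed

lemma cpolydisc_bound: "z \<in> cpolydisc n \<Longrightarrow> l < n \<Longrightarrow> cmod (z l) \<le> 1"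
  by (auto simp: cpolydisc_def PiE_iff)

lemma polydisc_sub: "polydisc n \<subseteq> cpolydisc n"
  unfolding polydisc_def cpolydisc_def by (intro PiE_mono) auto

lemma bdd_S: "bdd_above ((\<lambda>w. cmod (mpoly_eval n c w)) ` theta_map m p n ` cpolydisc n)"
proof -
  let ?B = "(\<Sum>\<alpha>\<in>{\<alpha>. c \<alpha> \<noteq> 0}. cmod (c \<alpha>) * (\<Prod>i<n. (2 ^ n) ^ \<alpha> i)) :: real"
  have "cmod (mpoly_eval n c (theta_map m p n z)) \<le> ?B" if z: "z \<in> cpolydisc n" for z
  proof -
    have "cmod (mpoly_eval n c (theta_map m p n z)) \<le> (\<Sum>\<alpha>\<in>{\<alpha>. c \<alpha> \<noteq> 0}. cmod (c \<alpha> * (\<Prod>i<n. theta m p n i z ^ \<alpha> i)))"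
      unfolding mp_theta by (rule norm_sum)
    also have "\<dots> \<le> ?B"
    proof (rule sum_mono)
      fix \<alpha>
      have "(\<Prod>i<n. cmod (theta m p n i z) ^ \<alpha> i) \<le> (\<Prod>i<n. (2 ^ n) ^ \<alpha> i)"
        by (intro prod_mono conjI power_mono theta_bound cpolydisc_bound[OF z]) auto
      then show "cmod (c \<alpha> * (\<Prod>i<n. theta m p n i z ^ \<alpha> i)) \<le> cmod (c \<alpha>) * (\<Prod>i<n. (2 ^ n) ^ \<alpha> i)"
        by (auto simp: norm_mult prod_norm[symmetric] norm_power intro!: mult_left_mono)
    qed
    finally show ?thesis .
  qed
  then show ?thesis by (auto simp: bdd_above_def)
qed

definition Sv where "Sv m p n c = (SUP w\<in>theta_map m p n ` cpolydisc n. cmod (mpoly_eval n c w))"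

lemma S_upper: "z \<in> cpolydisc n \<Longrightarrow> cmod (mpoly_eval n c (theta_map m p n z)) \<le> Sv m p n c"
  unfolding Sv_def image_image by (rule cSUP_upper) (use bdd_S[unfolded image_image] in auto)

lemma cpolydisc_ne: "restrict (\<lambda>_. 0) {..<n} \<in> cpolydisc n"
  by (auto simp: cpolydisc_def)

lemma S_nonneg: "0 \<le> Sv m p n c"
  using S_upper[OF cpolydisc_ne] norm_ge_zero order_trans by blast

lemma cont_theta: "continuous_on UNIV (theta m p n j)"
proof -
  have c: "continuous_on UNIV (\<lambda>x::nat\<Rightarrow>complex. x l)" for l by simp
  show ?thesis
    unfolding theta_def[abs_def]
    by (cases "j + 1 < n") (auto intro!: continuous_intros c)
qed

lemma cont_P: "continuous_on UNIV (\<lambda>x. mpoly_eval n c (theta_map m p n x))"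
  unfolding mp_theta by (intro continuous_intros cont_theta)

lemma holo_theta: "(\<lambda>w. theta m p n j (z(i := w))) holomorphic_on UNIV"
proof -
  have c: "(\<lambda>w. if l = i then w else z l) holomorphic_on UNIV" for l
    by (cases "l = i") auto
  show ?thesis
    unfolding theta_def
    by (cases "j + 1 < n") (auto intro!: holomorphic_intros c)
qed

lemma holo_mult:
  assumes "holo_polydisc n h"
  shows "holo_polydisc n (mult_op (theta m p n j) h)"
  unfolding holo_polydisc_def mult_op_def
proof (intro conjI ballI allI impI)
  show "continuous_on (polydisc n) (\<lambda>z. theta m p n j z * h z)"
    using assms continuous_on_subset[OF cont_theta subset_UNIV] unfolding holo_polydisc_def
    by (intro continuous_intros) auto
  fix z i assume "z \<in> polydisc n" "i < n"
  then show "(\<lambda>w. theta m p n j (z(i := w)) * h (z(i := w))) holomorphic_on ball 0 1"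
    using assms holomorphic_on_subset[OF holo_theta subset_UNIV] unfolding holo_polydisc_def
    by (intro holomorphic_intros) (auto intro: holomorphic_on_subset)
qed

lemma meas_coord: assumes "\<And>i. sets (M i) = sets borel" "l \<in> I"
  shows "(\<lambda>x. x l) \<in> borel_measurable (PiM I M)"
  using measurable_component_singleton[OF assms(2), of M] assms(1)
  by (metis measurable_cong_sets)

lemma meas_theta: assumes "\<And>i. sets (M i) = sets (borel::complex measure)"
  shows "theta m p n j \<in> borel_measurable (PiM {..<n} M)"
proof -
  have c: "(\<lambda>x::nat\<Rightarrow>complex. x l) \<in> borel_measurable (PiM {..<n} M)" if "l < n" for l
    using meas_coord[of M l "{..<n}", OF assms] that by auto
  show ?thesis
    unfolding theta_def[abs_def]
    by (cases "j + 1 < n") (auto intro!: borel_measurable_sum borel_measurable_prod borel_measurable_power c)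
qed

lemma sets_disc[simp]: "sets (disc_measure lam) = sets borel"
  by (simp add: disc_measure_def)

lemma space_disc[simp]: "space (disc_measure lam) = UNIV"
  by (simp add: disc_measure_def)

lemma disc_dens_meas:
  "(\<lambda>z::complex. ennreal (indicator (ball 0 1) z * ((lam - 1) / pi) * (1 - (cmod z)\<^sup>2) powr (lam - 2))) \<in> borel_measurable lborel"
  unfolding measurable_lborel1
  by (intro measurable_compose[OF _ measurable_ennreal] borel_measurable_times borel_measurable_indicator
      powr_real_measurable borel_measurable_const borel_measurable_diff borel_measurable_power borel_measurable_norm
      measurable_ident) auto

lemma disc_sf: "sigma_finite_measure (disc_measure lam)"
  unfolding disc_measure_def
  using sigma_finite_measure.sigma_finite_iff_density_finite[OF sigma_finite_lborel, OF disc_dens_meas[of lam]]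
  by simp

lemma disc_null: "emeasure (disc_measure lam) (- ball 0 1) = 0"
proof -
  have "emeasure (disc_measure lam) (- ball 0 1) = (\<integral>\<^sup>+ x. ennreal (indicator (ball 0 1) x * ((lam - 1) / pi) * (1 - (cmod x)\<^sup>2) powr (lam - 2)) * indicator (- ball 0 1) x \<partial>lborel)"
    unfolding disc_measure_def by (rule emeasure_density[OF disc_dens_meas]) simp
  also have "\<dots> = (\<integral>\<^sup>+ (x::complex). 0 \<partial>lborel)"
    by (rule nn_integral_cong) (simp add: indicator_def)
  finally show ?thesis by simp
qed

lemma AE_poly: "AE x in polydisc_measure n lam. x \<in> polydisc n"
proof -
  interpret product_sigma_finite "\<lambda>_. disc_measure lam" using disc_sf by (simp add: product_sigma_finite_def)
  have ai: "AE x in polydisc_measure n lam. x i \<in> ball 0 1" if i: "i \<in> {..<n}" for i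
  proof (rule AE_I')
    let ?N = "PiE {..<n} (\<lambda>j. if j = i then - ball 0 1 else UNIV)"
    have "?N \<in> sets (polydisc_measure n lam)"
      unfolding polydisc_measure_def by (intro sets_PiM_I_finite) auto
    moreover have "emeasure (polydisc_measure n lam) ?N = 0"
      unfolding polydisc_measure_def
      by (subst emeasure_PiM) (use i disc_null in auto)
    ultimately show "?N \<in> null_sets (polydisc_measure n lam)" by (auto intro: null_setsI)
    show "{x \<in> space (polydisc_measure n lam). x i \<notin> ball 0 1} \<subseteq> ?N"
      by (auto simp: polydisc_measure_def space_PiM PiE_iff extensional_def)
  qed
  have "AE x in polydisc_measure n lam. \<forall>i\<in>{..<n}. x i \<in> ball 0 1"
    by (rule AE_finite_allI) (use ai in auto)
  moreover have "AE x in polydisc_measure n lam. x \<in> space (polydisc_measure n lam)" by (rule AE_space)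
  ultimately show ?thesis
    by eventually_elim  (auto simp: polydisc_def polydisc_measure_def space_PiM PiE_iff)
qed

lemma polydisc_ne: "restrict (\<lambda>_. 0) {..<n} \<in> polydisc n"
  by (auto simp: polydisc_def)

lemma L2_mult:
  assumes g[measurable]: "g \<in> borel_measurable (polydisc_measure n lam)"
    and B: "\<And>z. z \<in> polydisc n \<Longrightarrow> cmod (g z) \<le> B"
    and h: "h \<in> L2space n lam"
  shows "mult_op g h \<in> L2space n lam \<and> L2norm n lam (mult_op g h) \<le> B * L2norm n lam h"
proof -
  let ?M = "polydisc_measure n lam"
  have B0: "0 \<le> B" using B[OF polydisc_ne] norm_ge_zero order_trans by blast
  have hm[measurable]: "h \<in> borel_measurable ?M" and hi: "integrable ?M (\<lambda>z. (cmod (h z))\<^sup>2)"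
    using h by (auto simp: L2space_def)
  have meas[measurable]: "mult_op g h \<in> borel_measurable ?M"
    unfolding mult_op_def by measurable
  have ae: "AE z in ?M. (cmod (mult_op g h z))\<^sup>2 \<le> B\<^sup>2 * (cmod (h z))\<^sup>2"
    using AE_poly
  proof eventually_elim
    case (elim z)
    have "(cmod (mult_op g h z))\<^sup>2 = (cmod (g z))\<^sup>2 * (cmod (h z))\<^sup>2"
      by (simp add: mult_op_def norm_mult power_mult_distrib)
    also have "\<dots> \<le> B\<^sup>2 * (cmod (h z))\<^sup>2"
      using B[OF elim] by (intro mult_right_mono power_mono) auto
    finally show ?case .
  qed
  have i2: "integrable ?M (\<lambda>z. B\<^sup>2 * (cmod (h z))\<^sup>2)"
    using hi by (rule integrable_mult_right)
  have i1: "integrable ?M (\<lambda>z. (cmod (mult_op g h z))\<^sup>2)"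
    by (rule Bochner_Integration.integrable_bound[OF i2]) (use ae in \<open>auto elim!: eventually_mono\<close>)
  have "(\<integral>z. (cmod (mult_op g h z))\<^sup>2 \<partial>?M) \<le> (\<integral>z. B\<^sup>2 * (cmod (h z))\<^sup>2 \<partial>?M)"
    by (rule integral_mono_AE[OF i1 i2 ae])
  also have "\<dots> = B\<^sup>2 * (\<integral>z. (cmod (h z))\<^sup>2 \<partial>?M)" by simp
  finally have "L2norm n lam (mult_op g h) \<le> sqrt (B\<^sup>2 * (\<integral>z. (cmod (h z))\<^sup>2 \<partial>?M))"
    unfolding L2norm_def by (rule real_sqrt_le_mono)
  also have "\<dots> = B * L2norm n lam h"
    using B0 by (simp add: L2norm_def real_sqrt_mult)
  finally show ?thesis using meas i1 by (auto simp: L2space_def)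
qed

lemma sets_circle[simp]: "sets circle_measure = sets borel"
  by (simp add: circle_measure_def)

lemma space_circle[simp]: "space circle_measure = UNIV"
  by (simp add: circle_measure_def)

lemma circle_fin: "emeasure circle_measure UNIV \<noteq> \<infinity>"
proof -
  have "emeasure circle_measure UNIV = (\<integral>\<^sup>+ t. ennreal (1 / (2*pi)) * indicator {0..2*pi} t \<partial>lborel)"
    unfolding circle_measure_def
    by (subst emeasure_density) (auto intro!: nn_integral_cong simp: indicator_def)
  also have "\<dots> = ennreal (1 / (2*pi)) * emeasure lborel {0..2*pi}"
    by (rule nn_integral_cmult_indicator) simp
  finally show ?thesis by (simp add: ennreal_mult_eq_top_iff)
qed

lemma circle_finite_measure: "finite_measure circle_measure"
  by (rule finite_measureI) (use circle_fin in simp)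

lemma Q_finite: "finite_measure (PiM {..<n::nat} (\<lambda>_. circle_measure))"
proof -
  interpret product_sigma_finite "\<lambda>_. circle_measure"
    using circle_finite_measure
    by (simp add: product_sigma_finite_def finite_measure_def)
  have "emeasure (PiM {..<n} (\<lambda>_. circle_measure)) (PiE {..<n} (\<lambda>_. UNIV)) = (\<Prod>i<n. emeasure circle_measure UNIV)"
    by (rule emeasure_PiM) auto
  also have "\<dots> \<noteq> \<infinity>" using circle_fin by (simp add: power_eq_top_ennreal)
  finally show ?thesis
    by (intro finite_measureI) (simp add: space_PiM)
qed

lemma HI:
  assumes kc: "continuous_on (polydisc n) k" and r: "0 < r" "r < 1"
  shows "integrable (PiM {..<n} (\<lambda>_. circle_measure))
           (\<lambda>t. (cmod (k (restrict (\<lambda>i. complex_of_real r * cis (t i)) {..<n})))\<^sup>2)"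
proof -
  let ?Q = "PiM {..<n} (\<lambda>_. circle_measure)"
  define Rm where "Rm = (\<lambda>s::nat\<Rightarrow>real. restrict (\<lambda>i. complex_of_real r * cis (s i)) {..<n})"
  define E where "E = (\<lambda>(t::nat\<Rightarrow>real) i. if i < n then t i else 0)"
  define C where "C = PiE {..<n} (\<lambda>_. cball (0::complex) r)"
  have RmC: "Rm s \<in> C" for s
    using r by (auto simp: Rm_def C_def norm_mult)
  have CP: "C \<subseteq> polydisc n"
    using r unfolding C_def polydisc_def by (intro PiE_mono) auto
  have "C = PiE UNIV (\<lambda>i. if i < n then cball 0 r else {undefined})"
  proof (rule set_eqI)
    fix x :: "nat \<Rightarrow> complex"
    have "x \<in> C \<longleftrightarrow> (\<forall>i. (i < n \<longrightarrow> x i \<in> cball 0 r) \<and> (\<not> i < n \<longrightarrow> x i = undefined))"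
      unfolding C_def PiE_iff extensional_def by auto
    also have "\<dots> \<longleftrightarrow> x \<in> PiE UNIV (\<lambda>i. if i < n then cball 0 r else {undefined})"
      unfolding PiE_iff by (simp add: extensional_def)
    finally show "x \<in> C \<longleftrightarrow> x \<in> PiE UNIV (\<lambda>i. if i < n then cball 0 r else {undefined})" .
  qed
  moreover have "compactin (product_topology (\<lambda>_. euclidean) UNIV) (PiE UNIV (\<lambda>i. if i < n then cball (0::complex) r else {undefined}))"
    by (subst compactin_PiE) auto
  ultimately have "compact C"
    by (simp add: euclidean_product_topology)
  then have "compact (k ` C)"
    using kc CP by (intro compact_continuous_image continuous_on_subset[OF kc])
  then obtain Mb where Mb: "\<And>z. z \<in> C \<Longrightarrow> norm (k z) \<le> Mb"
    using compact_imp_bounded[OF \<open>compact (k ` C)\<close>] unfolding bounded_iff by auto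
  have Rmc: "continuous_on UNIV Rm"
  proof (rule continuous_on_coordinatewise_then_product)
    fix i
    show "continuous_on UNIV (\<lambda>s. Rm s i)"
    proof (cases "i < n")
      case True
      have c: "continuous_on UNIV (\<lambda>s::nat\<Rightarrow>real. s i)" by simp
      show ?thesis using True unfolding Rm_def by (auto intro!: continuous_intros c)
    next
      case False
      then show ?thesis unfolding Rm_def by auto
    qed
  qed
  have Gc: "continuous_on UNIV (\<lambda>s. k (Rm s))"
    by (rule continuous_on_compose2[OF kc Rmc]) (use RmC CP in auto)
  have Gm: "(\<lambda>s. k (Rm s)) \<in> borel_measurable borel"
    by (rule borel_measurable_continuous_onI[OF Gc])
  have Em: "E \<in> borel_measurable ?Q"
  proof (rule measurable_coordinatewise_then_product)
    fix i
    show "(\<lambda>t. E t i) \<in> borel_measurable ?Q"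
    proof (cases "i < n")
      case True
      then show ?thesis unfolding E_def using meas_coord[of "\<lambda>_. circle_measure" i "{..<n}"] by auto
    qed (auto simp: E_def)
  qed
  have eq: "Rm (E t) = Rm t" for t by (auto simp: Rm_def E_def)
  have fm: "(\<lambda>t. k (Rm t)) \<in> borel_measurable ?Q"
    using measurable_compose[OF Em Gm] by (simp add: eq)
  interpret finite_measure ?Q by (rule Q_finite)
  have "integrable ?Q (\<lambda>t. (cmod (k (Rm t)))\<^sup>2)"
  proof (rule integrable_const_bound[where B="Mb\<^sup>2"])
    show "AE t in ?Q. norm ((cmod (k (Rm t)))\<^sup>2) \<le> Mb\<^sup>2"
    proof (intro AE_I2)
      fix t
      have "cmod (k (Rm t)) \<le> Mb" by (rule Mb[OF RmC])
      then show "norm ((cmod (k (Rm t)))\<^sup>2) \<le> Mb\<^sup>2"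
        by (simp add: power_mono)
    qed
    show "(\<lambda>t. (cmod (k (Rm t)))\<^sup>2) \<in> borel_measurable ?Q"
      using fm by measurable
  qed
  then show ?thesis by (simp add: Rm_def)
qed

lemma hardy_cont: "h \<in> hardy_space n \<Longrightarrow> continuous_on (polydisc n) h"
  by (simp add: hardy_space_def holo_polydisc_def)

lemma Rm_in: "0 < r \<Longrightarrow> r < 1 \<Longrightarrow> restrict (\<lambda>i. complex_of_real r * cis (t i)) {..<n} \<in> polydisc n"
  by (auto simp: polydisc_def norm_mult)

lemma hardy_int_mult:
  assumes gc: "continuous_on UNIV g" and B: "\<And>z. z \<in> polydisc n \<Longrightarrow> cmod (g z) \<le> B"
    and h: "h \<in> hardy_space n" and r: "0 < r" "r < 1"
  shows "hardy_int n (mult_op g h) r \<le> B\<^sup>2 * hardy_int n h r"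
proof -
  let ?Q = "PiM {..<n} (\<lambda>_. circle_measure)"
  have hc: "continuous_on (polydisc n) h" by (rule hardy_cont[OF h])
  have ghc: "continuous_on (polydisc n) (mult_op g h)"
    unfolding mult_op_def using continuous_on_subset[OF gc subset_UNIV] hc
    by (intro continuous_intros) auto
  note i1 = HI[OF ghc r]
  note i2 = integrable_mult_right[OF HI[OF hc r], of "B\<^sup>2"]
  have "hardy_int n (mult_op g h) r \<le> (\<integral>t. B\<^sup>2 * (cmod (h (restrict (\<lambda>i. complex_of_real r * cis (t i)) {..<n})))\<^sup>2 \<partial>?Q)"
    unfolding hardy_int_def
  proof (rule integral_mono[OF i1 i2])
    fix t
    let ?z = "restrict (\<lambda>i. complex_of_real r * cis (t i)) {..<n}"
    have "(cmod (mult_op g h ?z))\<^sup>2 = (cmod (g ?z))\<^sup>2 * (cmod (h ?z))\<^sup>2"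
      by (simp add: mult_op_def norm_mult power_mult_distrib)
    also have "\<dots> \<le> B\<^sup>2 * (cmod (h ?z))\<^sup>2"
      using B[OF Rm_in[OF r]] by (intro mult_right_mono power_mono) auto
    finally show "(cmod (mult_op g h ?z))\<^sup>2 \<le> B\<^sup>2 * (cmod (h ?z))\<^sup>2" .
  qed
  also have "\<dots> = B\<^sup>2 * hardy_int n h r" unfolding hardy_int_def by simp
  finally show ?thesis .
qed

lemma hardy_int_nonneg: "0 \<le> hardy_int n h r"
  unfolding hardy_int_def by (rule Bochner_Integration.integral_nonneg) auto

lemma hardy_mult:
  assumes gc: "continuous_on UNIV g" and B: "\<And>z. z \<in> polydisc n \<Longrightarrow> cmod (g z) \<le> B"
    and h: "h \<in> hardy_space n"
  shows "bdd_above (hardy_int n (mult_op g h) ` {0<..<1}) \<and> hardy_norm n (mult_op g h) \<le> B * hardy_norm n h"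
proof -
  have B0: "0 \<le> B" using B[OF polydisc_ne] norm_ge_zero order_trans by blast
  let ?H = "SUP r\<in>{0<..<1::real}. hardy_int n h r"
  have bh: "bdd_above (hardy_int n h ` {0<..<1})" using h by (simp add: hardy_space_def)
  have "(1/2::real) \<in> {0<..<1}" by simp
  then have ne: "{0<..<1::real} \<noteq> {}" by blast
  have le: "hardy_int n (mult_op g h) r \<le> B\<^sup>2 * ?H" if "r \<in> {0<..<1}" for r
  proof -
    have "hardy_int n (mult_op g h) r \<le> B\<^sup>2 * hardy_int n h r"
      using that by (intro hardy_int_mult[OF gc B h]) auto
    also have "\<dots> \<le> B\<^sup>2 * ?H"
      by (intro mult_left_mono cSUP_upper that bh) auto
    finally show ?thesis .
  qed
  have bd: "bdd_above (hardy_int n (mult_op g h) ` {0<..<1})"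
    using le by (intro bdd_aboveI2) auto
  have "(SUP r\<in>{0<..<1::real}. hardy_int n (mult_op g h) r) \<le> B\<^sup>2 * ?H"
    by (rule cSUP_least[OF ne le])
  then have "hardy_norm n (mult_op g h) \<le> sqrt (B\<^sup>2 * ?H)"
    unfolding hardy_norm_def by (rule real_sqrt_le_mono)
  also have "\<dots> = B * hardy_norm n h"
    using B0 by (simp add: hardy_norm_def real_sqrt_mult)
  finally show ?thesis using bd by simp
qed

lemma contraction_generic:
  assumes inv: "\<And>j h. j < n \<Longrightarrow> h \<in> V \<Longrightarrow> mult_op (theta m p n j) h \<in> V"
    and nrm: "\<And>c h. h \<in> V \<Longrightarrow> N (mult_op (\<lambda>x. mpoly_eval n c (theta_map m p n x)) h) \<le> Sv m p n c * N h"
  shows "theta_contraction m p n V N (\<lambda>j. mult_op (theta m p n j))"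
  unfolding theta_contraction_def
proof (intro conjI allI impI ballI)
  fix c h assume "is_poly_coeffs n c" "h \<in> V"
  then show "N (op_poly n c (\<lambda>j. mult_op (theta m p n j)) h)
         \<le> (SUP w\<in>theta_map m p n ` cpolydisc n. cmod (mpoly_eval n c w)) * N h"
    using nrm[of h c] unfolding op_poly_theta Sv_def by (simp add: mult_op_def)
next
  fix j h assume "j < n" "h \<in> V"
  then show "mult_op (theta m p n j) h \<in> V" by (rule inv)
qed (auto simp: mult_op_def algebra_simps)

lemma theta_pbound: "z \<in> polydisc n \<Longrightarrow> cmod (theta m p n j z) \<le> 2 ^ n"
  by (rule theta_bound) (auto simp: polydisc_def PiE_iff less_imp_le)

lemma P_pbound: "z \<in> polydisc n \<Longrightarrow> cmod (mpoly_eval n c (theta_map m p n z)) \<le> Sv m p n c"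
  using S_upper polydisc_sub by blast

lemma meas_theta_L2: "theta m p n j \<in> borel_measurable (polydisc_measure n lam)"
  unfolding polydisc_measure_def by (rule meas_theta) simp

lemma meas_P: "(\<lambda>x. mpoly_eval n c (theta_map m p n x)) \<in> borel_measurable (polydisc_measure n lam)"
  unfolding mp_theta
  by (intro borel_measurable_sum borel_measurable_times borel_measurable_const borel_measurable_prod
      borel_measurable_power meas_theta_L2)

lemma L2_contr: "theta_contraction m p n (L2space n lam) (L2norm n lam) (\<lambda>j. mult_op (theta m p n j))"
proof (rule contraction_generic)
  fix j h assume "h \<in> L2space n lam"
  then show "mult_op (theta m p n j) h \<in> L2space n lam"
    using L2_mult[OF meas_theta_L2 theta_pbound] by blast
next
  fix c h assume "h \<in> L2space n lam"
  then show "L2norm n lam (mult_op (\<lambda>x. mpoly_eval n c (theta_map m p n x)) h) \<le> Sv m p n c * L2norm n lam h"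
    using L2_mult[OF meas_P P_pbound] by blast
qed

lemma A_contr_gt: assumes "lam \<noteq> 1"
  shows "theta_contraction m p n (A_space n lam) (A_norm n lam) (\<lambda>j. mult_op (theta m p n j))"
proof (rule contraction_generic)
  fix j h assume "h \<in> A_space n lam"
  then show "mult_op (theta m p n j) h \<in> A_space n lam"
    using assms L2_mult[OF meas_theta_L2 theta_pbound] holo_mult by (auto simp: A_space_def)
next
  fix c h assume "h \<in> A_space n lam"
  then show "A_norm n lam (mult_op (\<lambda>x. mpoly_eval n c (theta_map m p n x)) h) \<le> Sv m p n c * A_norm n lam h"
    using assms L2_mult[OF meas_P P_pbound] by (auto simp: A_space_def A_norm_def)
qed

lemma A_contr_1:
  shows "theta_contraction m p n (A_space n 1) (A_norm n 1) (\<lambda>j. mult_op (theta m p n j))"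
proof (rule contraction_generic)
  fix j h assume "h \<in> A_space n 1"
  then show "mult_op (theta m p n j) h \<in> A_space n 1"
    using hardy_mult[OF cont_theta theta_pbound] holo_mult
    by (auto simp: A_space_def hardy_space_def)
next
  fix c h assume "h \<in> A_space n 1"
  then show "A_norm n 1 (mult_op (\<lambda>x. mpoly_eval n c (theta_map m p n x)) h) \<le> Sv m p n c * A_norm n 1 h"
    using hardy_mult[OF cont_P P_pbound] by (auto simp: A_space_def A_norm_def)
qed

theorem proposition4p11:
  fixes m p n :: nat
  assumes "0 < m" "0 < p" "p dvd m" "1 < n"
  shows "(\<forall>lam::real. lam > 1 \<longrightarrow>
            theta_contraction m p n (L2space n lam) (L2norm n lam) (\<lambda>j. mult_op (theta m p n j)))
       \<and> (\<forall>lam::real. lam \<ge> 1 \<longrightarrow>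
            theta_contraction m p n (A_space n lam) (A_norm n lam) (\<lambda>j. mult_op (theta m p n j)))"
proof (intro conjI allI impI)
  fix lam :: real
  show "theta_contraction m p n (L2space n lam) (L2norm n lam) (\<lambda>j. mult_op (theta m p n j))"
    by (rule L2_contr)
  show "theta_contraction m p n (A_space n lam) (A_norm n lam) (\<lambda>j. mult_op (theta m p n j))"
    using A_contr_gt[of lam] A_contr_1 by (cases "lam = 1") auto
qed

end
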